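(* Let $\mathcal{X}=\{x_1,\dots,x_n\}$, $S=\mathbb{R}^{\mathcal{X}}$, and let $p$ be a program, $\sigma\in S$ an environment and $t\in\mathbb{R}_{\geq 0}$ a time instant. Then: (1) $(p,\sigma,t)\to^{\star}(\mathit{skip},\sigma',0)$ if and only if $[\![p]\!](\sigma)=\langle [0,t),h,\sigma'\rangle$ for some $h\colon[0,t)\to\mathbb{R}^{\mathcal{X}}$; (2) $(p,\sigma,t)\to^{\star}(\mathit{stop},\sigma',0)$ if and only if there are $t'\in\mathbb{R}_{\geq0}\cup\{\infty\}$ with $t'>t$ and $h\colon[0,t')\to\mathbb{R}^{\mathcal{X}}$ with $h(t)=\sigma'$ such that either $[\![p]\!](\sigma)=\langle[0,t'),h,\sigma''\rangle$ for some $\sigma''$, or $[\![p]\!](\sigma)=\langle[0,t'),h\rangle$.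
   Context: Syntax. Fix variables $\mathcal{X}=\{x_1,\dots,x_n\}$. Linear terms: $s::= r\mid r\cdot x\mid s_1+s_2$ ($r\in\mathbb{R}$, $x\in\mathcal{X}$). Atomic programs: assignments $x:=s$ and differential statements $x_1'=u_1,\dots,x_n'=u_n\ \mathtt{for}\ s$ (abbreviated $\bar x'=\bar u\ \mathtt{for}\ s$), with $u_i,s$ linear terms. Programs: $p::= a\mid p;q\mid \mathtt{if}\ b\ \mathtt{then}\ p\ \mathtt{else}\ q\mid \mathtt{while}\ b\ \mathtt{do}\ p$, with $a$ atomic and $b$ an element of the free Boolean algebra generated by atoms $s_1\le s_2$, $s_1\ge s_2$. An environment is $\sigma\colon\mathcal{X}\to\mathbb{R}$; $s\sigma$, $b\sigma\in\{\top,\bot\}$ denote evaluation; $\sigma\triangledown[\bar v/\bar x]$ is $\sigma$ updated so that $x_i\mapsto v_i$. $\phi_\sigma\colon[0,\infty)\to\mathbb{R}^n$ denotes the solution of the linear ODE system $\bar x'=\bar u$ with initial value $(\sigma(x_1),\dots,\sigma(x_n))$. Small-step semantics: a relation $\to$ on triples $(p,\sigma,t)$ where $p$ is a program or one of the symbols $\mathit{skip},\mathit{stop}$, $\sigma$ an environment, $t\in\mathbb{R}_{\ge0}$, given by the rules: $(x:=s,\sigma,t)\to(\mathit{skip},\sigma\triangledown[s\sigma/x],t)$; $(\bar x'=\bar u\ \mathtt{for}\ s,\sigma,t)\to(\mathit{stop},\sigma\triangledown[\phi_\sigma(t)/\bar x],0)$ if $t<s\sigma$; $(\bar x'=\bar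 u\ \mathtt{for}\ s,\sigma,t)\to(\mathit{skip},\sigma\triangledown[\phi_\sigma(s\sigma)/\bar x],t-s\sigma)$ if $t\ge s\sigma$; $(\mathtt{if}\ b\ \mathtt{then}\ p\ \mathtt{else}\ q,\sigma,t)\to(p,\sigma,t)$ if $b\sigma=\top$ and $\to(q,\sigma,t)$ if $b\sigma=\bot$; $(\mathtt{while}\ b\ \mathtt{do}\ p,\sigma,t)\to(p;\mathtt{while}\ b\ \mathtt{do}\ p,\sigma,t)$ if $b\sigma=\top$ and $\to(\mathit{skip},\sigma,t)$ if $b\sigma=\bot$; if $(p,\sigma,t)\to(\mathit{stop},\sigma',t')$ then $(p;q,\sigma,t)\to(\mathit{stop},\sigma',t')$; if $(p,\sigma,t)\to(\mathit{skip},\sigma',t')$ then $(p;q,\sigma,t)\to(q,\sigma',t')$; if $(p,\sigma,t)\to(p',\sigma',t')$ with $p'\notin\{\mathit{skip},\mathit{stop}\}$ then $(p;q,\sigma,t)\to(p';q,\sigma',t')$. $\to^{\star}$ is the transitive closure of $\to$. Denotational semantics. For a set $S$, let $H_SX=\sum_{d\in\mathbb{R}_{\ge0}} S^{[0,d)}\times X\ \cup\ \sum_{I} S^{I}$, where in the second summand $I$ ranges over intervals $[0,d]$ ($d\in\mathbb{R}_{\ge0}$) and $[0,d)$ ($d\in\mathbb{R}_{\ge0}\cup\{\infty\}$); elements are written $\langle I,e,x\rangle$ and $\langle I,e\rangle$ with $e\colon I\to S$. Concatenation: $\langle[0,d_1),e_1\rangle\frown\langle J,e_2\rangle=\langle J',\lambda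 t.\ \text{if } t<d_1 \text{ then } e_1(t)\text{ else } e_2(t-d_1)\rangle$ with $J'=[0,d_1+d_2)$ if $J=[0,d_2)$ and $J'=[0,d_1+d_2]$ if $J=[0,d_2]$. Unit $\eta(x)=\langle\emptyset,!,x\rangle$. Kleisli lifting of $f\colon X\to H_SY$: $f^\star\langle I,e,x\rangle=\langle (I,e)\frown(J,e'),y\rangle$ if $f(x)=\langle J,e',y\rangle$; $f^\star\langle I,e,x\rangle=(I,e)\frown(J,e')$ if $f(x)=\langle J,e'\rangle$; $f^\star\langle I,e\rangle=\langle I,e\rangle$. For $g\colon X\to Y$, $H_S g=(\eta\cdot g)^\star$. Order on $H_SY$: $a\sqsubseteq b$ iff $a=b$, or $a=\langle I,e\rangle$ and $b$ is $\langle I',e'\rangle$ or $\langle I',e',y\rangle$ with $I\subseteq I'$ and $e=e'|_I$; functions are ordered pointwise. For $f\colon X\to H_S(Y\uplus X)$, $f^\dagger\colon X\to H_SY$ is the least fixpoint of $g\mapsto[\eta,g]^\star\cdot f$. Take $S=\mathbb{R}^{\mathcal{X}}$ and define $[\![p]\!]\colon S\to H_SS$: $[\![x:=s]\!](\sigma)=\eta(\sigma\triangledown[s\sigma/x])$; $[\![\bar x'=\bar u\ \mathtt{for}\ s]\!](\sigma)=\langle[0,s\sigma),\lambda t.\,\sigma\triangledown[\phi_\sigma(t)/\bar x],\sigma\triangledown[\phi_\sigma(s\sigma)/\bar x]\rangle$; $[\![p;q]\!](\sigma)=[\![q]\!]^\star([\![p]\!](\sigma))$; $[\![\mathtt{if}\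 b\ \mathtt{then}\ p\ \mathtt{else}\ q]\!](\sigma)$ is $[\![p]\!](\sigma)$ if $b\sigma=\top$ and $[\![q]\!](\sigma)$ otherwise; $[\![\mathtt{while}\ b\ \mathtt{do}\ p]\!](\sigma)=\big(\lambda\sigma.\ \text{if } b\sigma=\top \text{ then } (H_S\mathsf{inr})([\![p]\!](\sigma)) \text{ else } \eta(\mathsf{inl}\,\sigma)\big)^\dagger(\sigma)$. *)

theory Defs
  imports "HOL-Analysis.Analysis"
begin

text \<open>Variables are the elements of a finite type 'v; environments are vectors in real^'v.\<close>

datatype 'v lterm = LConst real | LVar real 'v | LPlus "'v lterm" "'v lterm"

primrec leval :: "'v lterm \<Rightarrow> real^'v \<Rightarrow> real" where
  "leval (LConst r) \<sigma> = r"
| "leval (LVar r x) \<sigma> = r * (\<sigma> $ x)"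
| "leval (LPlus s1 s2) \<sigma> = leval s1 \<sigma> + leval s2 \<sigma>"

datatype 'v bexp = BLe "'v lterm" "'v lterm" | BGe "'v lterm" "'v lterm"
  | BTrue | BFalse | BNot "'v bexp" | BAnd "'v bexp" "'v bexp" | BOr "'v bexp" "'v bexp"

primrec bval :: "'v bexp \<Rightarrow> real^'v \<Rightarrow> bool" where
  "bval (BLe s1 s2) \<sigma> = (leval s1 \<sigma> \<le> leval s2 \<sigma>)"
| "bval (BGe s1 s2) \<sigma> = (leval s1 \<sigma> \<ge> leval s2 \<sigma>)"
| "bval BTrue \<sigma> = True"
| "bval BFalse \<sigma> = False"
| "bval (BNot b) \<sigma> = (\<not> bval b \<sigma>)"
| "bval (BAnd b1 b2) \<sigma> = (bval b1 \<sigma> \<and> bval b2 \<sigma>)"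
| "bval (BOr b1 b2) \<sigma> = (bval b1 \<sigma> \<or> bval b2 \<sigma>)"

text \<open>Programs. ODE u s is the differential statement x_1'=u x_1, ..., x_n'=u x_n for s.\<close>
datatype 'v prog = Assign 'v "'v lterm" | ODE "'v \<Rightarrow> 'v lterm" "'v lterm"
  | Seq "'v prog" "'v prog" | If "'v bexp" "'v prog" "'v prog" | While "'v bexp" "'v prog"

definition upd :: "real^'v \<Rightarrow> 'v \<Rightarrow> real \<Rightarrow> real^'v" where
  "upd \<sigma> x v = (\<chi> y. if y = x then v else \<sigma> $ y)"

text \<open>The solution phi_sigma : [0,inf) -> R^n of the linear ODE x' = u(x), x(0) = sigma
 (extended by the constant sigma to negative times, for definiteness).\<close>
definition ode_sol :: "('v::finite \<Rightarrow> 'v lterm) \<Rightarrow> real^'v \<Rightarrow> real \<Rightarrow> real^'v" where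
  "ode_sol u \<sigma> = (THE \<phi>. \<phi> 0 = \<sigma>
      \<and> (\<forall>t\<ge>0. (\<phi> has_vector_derivative (\<chi> i. leval (u i) (\<phi> t))) (at t within {0..}))
      \<and> (\<forall>t<0. \<phi> t = \<sigma>))"

text \<open>Duration of a differential statement (convention: negative values are read as 0).\<close>
definition dur :: "'v lterm \<Rightarrow> real^'v \<Rightarrow> real" where
  "dur s \<sigma> = max 0 (leval s \<sigma>)"

datatype 'v cmd = Prog "'v prog" | Skip | Stop

inductive step :: "'v::finite cmd \<times> (real^'v) \<times> real \<Rightarrow> 'v cmd \<times> (real^'v) \<times> real \<Rightarrow> bool" where
  assign: "step (Prog (Assign x s), \<sigma>, t) (Skip, upd \<sigma> x (leval s \<sigma>), t)"
| ode_stop: "t < dur s \<sigma> \<Longrightarrow> step (Prog (ODE u s), \<sigma>, t) (Stop, ode_sol u \<sigma> t, 0)"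
| ode_skip: "t \<ge> dur s \<sigma> \<Longrightarrow> step (Prog (ODE u s), \<sigma>, t) (Skip, ode_sol u \<sigma> (dur s \<sigma>), t - dur s \<sigma>)"
| if_true: "bval b \<sigma> \<Longrightarrow> step (Prog (If b p q), \<sigma>, t) (Prog p, \<sigma>, t)"
| if_false: "\<not> bval b \<sigma> \<Longrightarrow> step (Prog (If b p q), \<sigma>, t) (Prog q, \<sigma>, t)"
| while_true: "bval b \<sigma> \<Longrightarrow> step (Prog (While b p), \<sigma>, t) (Prog (Seq p (While b p)), \<sigma>, t)"
| while_false: "\<not> bval b \<sigma> \<Longrightarrow> step (Prog (While b p), \<sigma>, t) (Skip, \<sigma>, t)"
| seq_stop: "step (Prog p, \<sigma>, t) (Stop, \<sigma>', t') \<Longrightarrow> step (Prog (Seq p q), \<sigma>, t) (Stop, \<sigma>', t')"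
| seq_skip: "step (Prog p, \<sigma>, t) (Skip, \<sigma>', t') \<Longrightarrow> step (Prog (Seq p q), \<sigma>, t) (Prog q, \<sigma>', t')"
| seq_prog: "step (Prog p, \<sigma>, t) (Prog p', \<sigma>', t') \<Longrightarrow> step (Prog (Seq p q), \<sigma>, t) (Prog (Seq p' q), \<sigma>', t')"

text \<open>Conv d e x is <[0,d), e, x> (with dom e = [0,d)); Div e is <I, e> where I = dom e
  is an interval [0,d] or [0,d). Trajectories are partial maps whose domain is the interval.\<close>
datatype ('s, 'a) H = Conv real "real \<Rightarrow> 's option" 'a | Div "real \<Rightarrow> 's option"

definition cat :: "real \<Rightarrow> (real \<Rightarrow> 's option) \<Rightarrow> (real \<Rightarrow> 's option) \<Rightarrow> (real \<Rightarrow> 's option)" where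
  "cat d e1 e2 = (\<lambda>t. if t < d then e1 t else e2 (t - d))"

definition eta :: "'a \<Rightarrow> ('s, 'a) H" where
  "eta x = Conv 0 Map.empty x"

fun kl :: "('a \<Rightarrow> ('s, 'b) H) \<Rightarrow> ('s, 'a) H \<Rightarrow> ('s, 'b) H" where
  "kl f (Conv d e x) = (case f x of
       Conv d' e' y \<Rightarrow> Conv (d + d') (cat d e e') y
     | Div e' \<Rightarrow> Div (cat d e e'))"
| "kl f (Div e) = Div e"

definition hmap :: "('a \<Rightarrow> 'b) \<Rightarrow> ('s, 'a) H \<Rightarrow> ('s, 'b) H" where
  "hmap g = kl (eta \<circ> g)"

definition le_H :: "('s, 'a) H \<Rightarrow> ('s, 'a) H \<Rightarrow> bool" where
  "le_H a b \<longleftrightarrow> a = b \<or> (\<exists>e. a = Div e \<and>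
      ((\<exists>e'. b = Div e' \<and> e \<subseteq>\<^sub>m e') \<or> (\<exists>d e' y. b = Conv d e' y \<and> e \<subseteq>\<^sub>m e')))"

text \<open>f^dagger: least fixpoint (pointwise order) of g \<mapsto> [eta, g]^* \<circ> f.\<close>
definition dagger :: "('x \<Rightarrow> ('s, 'y + 'x) H) \<Rightarrow> 'x \<Rightarrow> ('s, 'y) H" where
  "dagger f = (THE g. g = (\<lambda>x. kl (case_sum eta g) (f x))
      \<and> (\<forall>g'. g' = (\<lambda>x. kl (case_sum eta g') (f x)) \<longrightarrow> (\<forall>x. le_H (g x) (g' x))))"

primrec sem :: "'v::finite prog \<Rightarrow> real^'v \<Rightarrow> (real^'v, real^'v) H" where
  "sem (Assign x s) \<sigma> = eta (upd \<sigma> x (leval s \<sigma>))"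
| "sem (ODE u s) \<sigma> = Conv (dur s \<sigma>)
      (\<lambda>t. if 0 \<le> t \<and> t < dur s \<sigma> then Some (ode_sol u \<sigma> t) else None)
      (ode_sol u \<sigma> (dur s \<sigma>))"
| "sem (Seq p q) \<sigma> = kl (sem q) (sem p \<sigma>)"
| "sem (If b p q) \<sigma> = (if bval b \<sigma> then sem p \<sigma> else sem q \<sigma>)"
| "sem (While b p) \<sigma> = dagger (\<lambda>\<sigma>. if bval b \<sigma> then hmap Inr (sem p \<sigma>) else eta (Inl \<sigma>)) \<sigma>"

end

theory Submission
  imports Defs
begin

definition traj :: "('s,'a) H \<Rightarrow> real \<Rightarrow> 's option" where
  "traj a = (case a of Conv d e y \<Rightarrow> e | Div e \<Rightarrow> e)"

definition isConv :: "('s,'a) H \<Rightarrow> bool" where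
  "isConv a = (case a of Conv d e y \<Rightarrow> True | Div e \<Rightarrow> False)"

definition shift :: "real \<Rightarrow> (real \<Rightarrow> 's option) \<Rightarrow> ('s,'a) H \<Rightarrow> ('s,'a) H" where
  "shift d e a = (case a of Conv d' e' y \<Rightarrow> Conv (d + d') (cat d e e') y | Div e' \<Rightarrow> Div (cat d e e'))"

lemma traj_simps[simp]: "traj (Conv d e y) = e" "traj (Div e) = e"
  by (simp_all add: traj_def)

lemma isConv_simps[simp]: "isConv (Conv d e y)" "\<not> isConv (Div e)"
  by (simp_all add: isConv_def)

lemma shift_simps[simp]: "shift d e (Conv d' e' y) = Conv (d + d') (cat d e e') y"
  "shift d e (Div e') = Div (cat d e e')"
  by (simp_all add: shift_def)

lemma kl_Conv[simp]: "kl f (Conv d e x) = shift d e (f x)"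
  by (simp add: shift_def split: H.split)

declare kl.simps(1)[simp del]

lemma traj_shift: "traj (shift d e a) = cat d e (traj a)"
  by (cases a) auto

lemma isConv_shift[simp]: "isConv (shift d e a) = isConv a"
  by (cases a) auto

lemma cat_assoc: "0 \<le> d' \<Longrightarrow> cat d e (cat d' e' e'') = cat (d+d') (cat d e e') e''"
  by (auto simp: cat_def fun_eq_iff algebra_simps)

lemma shift_shift: "0 \<le> d' \<Longrightarrow> shift d e (shift d' e' a) = shift (d+d') (cat d e e') a"
  by (cases a) (auto simp: cat_assoc add.assoc)

lemma shift0: "shift 0 (traj a) a = a"
  by (cases a) (auto simp: cat_def)

lemma kl_shift: "(\<And>d' e' y. a = Conv d' e' y \<Longrightarrow> 0 \<le> d') \<Longrightarrow> kl f (shift d e a) = shift d e (kl f a)"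
  by (cases a) (auto simp: kl_Conv shift_shift)

lemma le_H_refl[simp]: "le_H a a" by (simp add: le_H_def)

lemma le_H_Conv: "le_H (Conv d e y) b \<longleftrightarrow> b = Conv d e y"
  by (auto simp: le_H_def)

lemma le_H_Div: "le_H (Div e) b \<longleftrightarrow> e \<subseteq>\<^sub>m traj b"
  by (cases b) (auto simp: le_H_def)

lemma le_H_traj: "le_H a b \<Longrightarrow> traj a \<subseteq>\<^sub>m traj b"
  by (cases a) (auto simp: le_H_Div le_H_Conv)

lemma le_H_trans: "le_H a b \<Longrightarrow> le_H b c \<Longrightarrow> le_H a c"
  by (cases a; cases b) (auto simp: le_H_Div le_H_Conv dest: le_H_traj intro: map_le_trans)

lemma le_H_antisym: "le_H a b \<Longrightarrow> le_H b a \<Longrightarrow> a = b"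
  by (cases a; cases b) (auto simp: le_H_Div le_H_Conv intro: map_le_antisym)

lemma cat_mono: "e1 \<subseteq>\<^sub>m e2 \<Longrightarrow> cat d e e1 \<subseteq>\<^sub>m cat d e e2"
  by (auto simp: map_le_def cat_def dom_def)

lemma shift_mono: "le_H a b \<Longrightarrow> le_H (shift d e a) (shift d e b)"
  by (cases a) (auto simp: le_H_Div le_H_Conv traj_shift cat_mono)

lemma kl_mono: "(\<And>y. le_H (h y) (h' y)) \<Longrightarrow> le_H (kl h a) (kl h' a)"
  by (cases a) (auto simp: kl_Conv shift_mono)

definition Phi :: "('x \<Rightarrow> ('s, 'y + 'x) H) \<Rightarrow> ('x \<Rightarrow> ('s,'y) H) \<Rightarrow> 'x \<Rightarrow> ('s,'y) H" where
  "Phi f g = (\<lambda>x. kl (case_sum eta g) (f x))"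

definition G :: "('x \<Rightarrow> ('s, 'y + 'x) H) \<Rightarrow> nat \<Rightarrow> 'x \<Rightarrow> ('s,'y) H" where
  "G f n = (Phi f ^^ n) (\<lambda>x. Div Map.empty)"

lemma G_0[simp]: "G f 0 x = Div Map.empty" by (simp add: G_def)
lemma G_Suc: "G f (Suc n) = Phi f (G f n)" by (simp add: G_def)

lemma Phi_mono: "(\<And>x. le_H (g x) (g' x)) \<Longrightarrow> le_H (Phi f g x) (Phi f g' x)"
  unfolding Phi_def by (rule kl_mono) (auto split: sum.split)

lemma G_chain: "le_H (G f n x) (G f (Suc n) x)"
proof (induction n arbitrary: x)
  case 0 then show ?case by (simp add: le_H_Div)
next
  case (Suc n) then show ?case by (simp only: G_Suc) (rule Phi_mono)
qed

lemma G_chain_le: "n \<le> m \<Longrightarrow> le_H (G f n x) (G f m x)"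
proof (induction m rule: dec_induct)
  case base then show ?case by simp
next
  case (step m) then show ?case using G_chain[of f m x] le_H_trans by metis
qed

lemma G_Conv_stable: "isConv (G f n x) \<Longrightarrow> n \<le> m \<Longrightarrow> G f m x = G f n x"
  using G_chain_le[of n m f x] by (cases "G f n x") (auto simp: le_H_Conv)

lemma G_Conv_unique: "isConv (G f n x) \<Longrightarrow> isConv (G f m x) \<Longrightarrow> G f n x = G f m x"
  by (metis G_Conv_stable nle_le)

definition lubm :: "(nat \<Rightarrow> real \<Rightarrow> 's option) \<Rightarrow> real \<Rightarrow> 's option" where
  "lubm M t = (if \<exists>n. M n t \<noteq> None then M (SOME n. M n t \<noteq> None) t else None)"

lemma lubm_iff:
  assumes "\<And>n m. n \<le> m \<Longrightarrow> M n \<subseteq>\<^sub>m M m"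
  shows "lubm M t = Some s \<longleftrightarrow> (\<exists>n. M n t = Some s)"
proof
  assume "lubm M t = Some s" then show "\<exists>n. M n t = Some s"
    by (auto simp: lubm_def split: if_splits)
next
  assume "\<exists>n. M n t = Some s"
  then obtain n where n: "M n t = Some s" by blast
  define k where "k = (SOME n. M n t \<noteq> None)"
  have k: "M k t \<noteq> None" unfolding k_def by (rule someI[of "\<lambda>n. M n t \<noteq> None" n]) (simp add: n)
  have "M k t = M n t"
  proof (cases "k \<le> n")
    case True then show ?thesis using assms[OF True] k by (auto simp: map_le_def dom_def)
  next
    case False then have "n \<le> k" by simp
    then show ?thesis using assms[of n k] n by (auto simp: map_le_def dom_def)
  qed
  then show "lubm M t = Some s" using n unfolding lubm_def k_def[symmetric] by auto
qed

definition gstar :: "('x \<Rightarrow> ('s, 'y + 'x) H) \<Rightarrow> 'x \<Rightarrow> ('s,'y) H" where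
  "gstar f x = (if \<exists>n. isConv (G f n x) then G f (SOME n. isConv (G f n x)) x
     else Div (lubm (\<lambda>n. traj (G f n x))))"

lemma gstar_ConvI: "isConv (G f n x) \<Longrightarrow> gstar f x = G f n x"
  unfolding gstar_def by (metis (mono_tags, lifting) G_Conv_unique someI)

lemma G_traj_chain: "n \<le> m \<Longrightarrow> traj (G f n x) \<subseteq>\<^sub>m traj (G f m x)"
  by (rule le_H_traj[OF G_chain_le])

lemma gstar_ub: "le_H (G f n x) (gstar f x)"
proof (cases "\<exists>k. isConv (G f k x)")
  case True
  then obtain k where k: "isConv (G f k x)" by blast
  show ?thesis
  proof (cases "n \<le> k")
    case True then show ?thesis using gstar_ConvI[OF k] G_chain_le by metis
  next
    case False then show ?thesis using gstar_ConvI[OF k] G_Conv_stable[OF k, of n] by simp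
  qed
next
  case False
  then obtain e where e: "G f n x = Div e" by (cases "G f n x") (metis isConv_simps(1), blast)
  have "gstar f x = Div (lubm (\<lambda>n. traj (G f n x)))" using False by (simp add: gstar_def)
  moreover have "e \<subseteq>\<^sub>m lubm (\<lambda>n. traj (G f n x))"
    unfolding map_le_def using lubm_iff[of "\<lambda>n. traj (G f n x)", OF G_traj_chain] e
    by (metis domD traj_simps(2))
  ultimately show ?thesis using e by (simp add: le_H_Div)
qed

lemma traj_gstar: "traj (gstar f x) t = Some s \<longleftrightarrow> (\<exists>n. traj (G f n x) t = Some s)"
proof
  assume a: "traj (gstar f x) t = Some s"
  show "\<exists>n. traj (G f n x) t = Some s"
  proof (cases "\<exists>k. isConv (G f k x)")
    case True then show ?thesis using a gstar_ConvI by metis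
  next
    case False then show ?thesis using a lubm_iff[of "\<lambda>n. traj (G f n x)", OF G_traj_chain]
      by (simp add: gstar_def)
  qed
next
  assume "\<exists>n. traj (G f n x) t = Some s"
  then obtain n where n: "traj (G f n x) t = Some s" by blast
  have "traj (G f n x) \<subseteq>\<^sub>m traj (gstar f x)" by (rule le_H_traj[OF gstar_ub])
  then show "traj (gstar f x) t = Some s" using n unfolding map_le_def by force
qed

lemma gstar_Conv: "gstar f x = Conv d e y \<Longrightarrow> \<exists>n. G f n x = Conv d e y"
  by (metis H.distinct(1) gstar_ConvI gstar_def)

lemma gstar_least:
  assumes hfix: "g' = Phi f g'"
  shows "le_H (gstar f x) (g' x)"
proof -
  have G: "le_H (G f n x) (g' x)" for n x
  proof (induction n arbitrary: x)
    case 0 then show ?case by (simp add: le_H_Div)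
  next
    case (Suc n) then show ?case by (simp only: G_Suc) (metis Phi_mono hfix)
  qed
  show ?thesis
  proof (cases "\<exists>k. isConv (G f k x)")
    case True then show ?thesis using gstar_ConvI G by metis
  next
    case False
    then obtain U where U: "gstar f x = Div U" by (simp add: gstar_def)
    have "U \<subseteq>\<^sub>m traj (g' x)"
      unfolding map_le_def
    proof
      fix t assume "t \<in> dom U"
      then obtain s where s: "U t = Some s" by blast
      then obtain n where "traj (G f n x) t = Some s" using traj_gstar[of f x t s] U by auto
      moreover have "traj (G f n x) \<subseteq>\<^sub>m traj (g' x)" by (rule le_H_traj[OF G])
      ultimately have "traj (g' x) t = Some s" unfolding map_le_def by force
      then show "U t = traj (g' x) t" using s by simp
    qed
    then show ?thesis using U by (simp add: le_H_Div)
  qed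
qed

lemma option_eqI: "(\<And>s. a = Some s \<longleftrightarrow> b = Some s) \<Longrightarrow> a = b"
  by (cases a; cases b) auto

lemma gstar_fix: "gstar f x = Phi f (gstar f) x"
proof (cases "f x")
  case (Div e)
  have Ph: "Phi f g x = Div e" for g by (simp add: Phi_def Div)
  have GS: "G f (Suc n) x = Div e" for n by (simp add: G_Suc Ph)
  have nc: "\<not> isConv (G f n x)" for n by (cases n) (simp_all add: GS)
  have "lubm (\<lambda>n. traj (G f n x)) = e"
  proof
    fix t show "lubm (\<lambda>n. traj (G f n x)) t = e t"
    proof (rule option_eqI)
      fix s
      have "(\<exists>n. traj (G f n x) t = Some s) \<longleftrightarrow> e t = Some s"
        by (metis GS G_0 lessI less_Suc_eq_0_disj option.distinct(1) traj_simps(2))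
      then show "lubm (\<lambda>n. traj (G f n x)) t = Some s \<longleftrightarrow> e t = Some s"
        using lubm_iff[of "\<lambda>n. traj (G f n x)", OF G_traj_chain] by simp
    qed
  qed
  then show ?thesis using nc by (simp add: gstar_def Ph)
next
  case (Conv d e z)
  show ?thesis
  proof (cases z)
    case (Inl y)
    have Ph: "Phi f g x = shift d e (eta y)" for g by (simp add: Phi_def Conv Inl kl_Conv)
    have "isConv (G f 1 x)" by (simp add: G_Suc Ph eta_def)
    then have "gstar f x = G f 1 x" by (rule gstar_ConvI)
    then show ?thesis by (simp add: G_Suc Ph)
  next
    case (Inr y)
    have Ph: "Phi f g x = shift d e (g y)" for g by (simp add: Phi_def Conv Inr kl_Conv)
    have GS: "G f (Suc n) x = shift d e (G f n y)" for n by (simp add: G_Suc Ph)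
    show ?thesis
    proof (cases "\<exists>n. isConv (G f n y)")
      case True
      then obtain n where n: "isConv (G f n y)" by blast
      have "isConv (G f (Suc n) x)" using n by (simp add: GS)
      then have "gstar f x = G f (Suc n) x" by (rule gstar_ConvI)
      then show ?thesis using gstar_ConvI[OF n] by (simp add: GS Ph)
    next
      case False
      have nc: "\<not> isConv (G f n x)" for n using False by (cases n) (simp_all add: GS)
      obtain Uy where Uy: "gstar f y = Div Uy" using False by (simp add: gstar_def)
      have "lubm (\<lambda>n. traj (G f n x)) = cat d e Uy"
      proof
        fix t show "lubm (\<lambda>n. traj (G f n x)) t = cat d e Uy t"
        proof (rule option_eqI)
          fix s
          have "(\<exists>n. traj (G f n x) t = Some s) \<longleftrightarrow> (\<exists>n. traj (G f (Suc n) x) t = Some s)"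
            by (metis G_0 not0_implies_Suc option.distinct(1) traj_simps(2))
          also have "\<dots> \<longleftrightarrow> (\<exists>n. cat d e (traj (G f n y)) t = Some s)"
            by (simp add: GS traj_shift)
          also have "\<dots> \<longleftrightarrow> cat d e Uy t = Some s"
            using traj_gstar[of f y _ s] Uy by (auto simp: cat_def)
          finally show "lubm (\<lambda>n. traj (G f n x)) t = Some s \<longleftrightarrow> cat d e Uy t = Some s"
            using lubm_iff[of "\<lambda>n. traj (G f n x)", OF G_traj_chain] by simp
        qed
      qed
      then show ?thesis using nc Uy by (simp add: gstar_def Ph)
    qed
  qed
qed

lemma dagger_eq: "dagger f = gstar f"
  unfolding dagger_def
proof (rule the_equality)
  show "gstar f = (\<lambda>x. kl (case_sum eta (gstar f)) (f x)) \<and>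
    (\<forall>g'. g' = (\<lambda>x. kl (case_sum eta g') (f x)) \<longrightarrow> (\<forall>x. le_H (gstar f x) (g' x)))"
    using gstar_fix[of f] gstar_least[of _ f] unfolding Phi_def by auto
next
  fix g assume g: "g = (\<lambda>x. kl (case_sum eta g) (f x)) \<and>
    (\<forall>g'. g' = (\<lambda>x. kl (case_sum eta g') (f x)) \<longrightarrow> (\<forall>x. le_H (g x) (g' x)))"
  have 1: "le_H (g x) (gstar f x)" for x
    using g gstar_fix[of f] unfolding Phi_def by metis
  have 2: "le_H (gstar f x) (g x)" for x
    using g gstar_least[of g f] unfolding Phi_def by metis
  show "g = gstar f" using 1 2 le_H_antisym by blast
qed


definition Fw :: "'v::finite bexp \<Rightarrow> 'v prog \<Rightarrow> real^'v \<Rightarrow> (real^'v, real^'v + real^'v) H" where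
  "Fw b p = (\<lambda>\<sigma>. if bval b \<sigma> then hmap Inr (sem p \<sigma>) else eta (Inl \<sigma>))"

lemma sem_While_gstar: "sem (While b p) \<sigma> = gstar (Fw b p) \<sigma>"
  by (simp add: Fw_def dagger_eq)

lemma cat_empty0: "cat 0 Map.empty Map.empty = Map.empty"
  by (simp add: cat_def fun_eq_iff)

lemma shift_cat_trunc: "shift d (cat d e E) a = shift d e a"
  by (cases a) (auto simp: cat_def fun_eq_iff)

lemma kl_hmap_Inr: "kl (case_sum eta g) (hmap Inr a) = kl g a"
  by (cases a) (auto simp: hmap_def eta_def shift_cat_trunc)

lemma kl_eta_Inl: "kl (case_sum eta g) (eta (Inl \<sigma>)) = eta \<sigma>"
  by (simp add: eta_def cat_empty0)

lemma Phi_Fw: "Phi (Fw b p) g \<sigma> = (if bval b \<sigma> then kl g (sem p \<sigma>) else eta \<sigma>)"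
  by (simp add: Phi_def Fw_def kl_hmap_Inr kl_eta_Inl)

lemma G_Fw_Suc: "G (Fw b p) (Suc n) \<sigma> = (if bval b \<sigma> then kl (G (Fw b p) n) (sem p \<sigma>) else eta \<sigma>)"
  by (simp add: G_Suc Phi_Fw)

lemma sem_While: "sem (While b p) \<sigma> = (if bval b \<sigma> then kl (sem (While b p)) (sem p \<sigma>) else eta \<sigma>)"
proof -
  have "sem (While b p) = gstar (Fw b p)" by (rule ext) (rule sem_While_gstar)
  then show ?thesis using gstar_fix[of "Fw b p" \<sigma>] by (simp add: Phi_Fw)
qed

definition good_dom :: "real set \<Rightarrow> bool" where
  "good_dom A \<longleftrightarrow> A \<subseteq> {0..} \<and> (\<forall>x\<in>A. \<forall>y. 0 \<le> y \<longrightarrow> y \<le> x \<longrightarrow> y \<in> A) \<and> (\<forall>x\<in>A. \<exists>y\<in>A. x < y)"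

definition inv :: "('s,'a) H \<Rightarrow> bool" where
  "inv a = (case a of Conv d e y \<Rightarrow> 0 \<le> d \<and> dom e = {0..<d} | Div e \<Rightarrow> good_dom (dom e))"

lemma inv_simps[simp]: "inv (Conv d e y) \<longleftrightarrow> 0 \<le> d \<and> dom e = {0..<d}"
  "inv (Div e) \<longleftrightarrow> good_dom (dom e)"
  by (simp_all add: inv_def)

lemma good_dom_interval: "good_dom {0..<d}"
  unfolding good_dom_def
proof (intro conjI ballI allI impI)
  fix x assume x: "x \<in> {0..<d}"
  show "\<exists>y\<in>{0..<d}. x < y" using x by (intro bexI[of _ "(x + d)/2"]) auto
qed auto

lemma inv_good_dom: "inv a \<Longrightarrow> good_dom (dom (traj a))"
  by (cases a) (auto simp: good_dom_interval)

lemma good_dom_Union: "(\<And>n. good_dom (A n)) \<Longrightarrow> good_dom (\<Union>n. A n)"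
  unfolding good_dom_def by blast

lemma inv_eta[simp]: "inv (eta x)"
  by (simp add: eta_def)

lemma dom_cat: "dom (cat d e e') = {t. (t < d \<and> t \<in> dom e) \<or> (d \<le> t \<and> t - d \<in> dom e')}"
  by (auto simp: cat_def dom_def)

lemma inv_shift:
  assumes "0 \<le> d" "dom e = {0..<d}" "inv a"
  shows "inv (shift d e a)"
proof (cases a)
  case (Conv d' e' y)
  then have "0 \<le> d'" "dom e' = {0..<d'}" using assms by auto
  then show ?thesis using assms Conv by (auto simp: dom_cat)
next
  case (Div e')
  then have g: "good_dom (dom e')" using assms by auto
  have "good_dom (dom (cat d e e'))"
    unfolding good_dom_def dom_cat
  proof (intro conjI ballI allI impI)
    show "{t. t < d \<and> t \<in> dom e \<or> d \<le> t \<and> t - d \<in> dom e'} \<subseteq> {0..}"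
      using assms g by (auto simp: good_dom_def)
  next
    fix x y assume x: "x \<in> {t. t < d \<and> t \<in> dom e \<or> d \<le> t \<and> t - d \<in> dom e'}"
      and y: "0 \<le> y" "y \<le> x"
    show "y \<in> {t. t < d \<and> t \<in> dom e \<or> d \<le> t \<and> t - d \<in> dom e'}"
    proof (cases "y < d")
      case True then show ?thesis using assms y by auto
    next
      case False
      then have "x - d \<in> dom e'" "d \<le> x" using x y assms by auto
      then have "y - d \<in> dom e'" using g False y unfolding good_dom_def by auto
      then show ?thesis using False by auto
    qed
  next
    fix x assume x: "x \<in> {t. t < d \<and> t \<in> dom e \<or> d \<le> t \<and> t - d \<in> dom e'}"
    show "\<exists>y\<in>{t. t < d \<and> t \<in> dom e \<or> d \<le> t \<and> t - d \<in> dom e'}. x < y"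
    proof (cases "x < d")
      case True
      then have "0 \<le> x" using x assms by auto
      then show ?thesis using True assms by (intro bexI[of _ "(x+d)/2"]) auto
    next
      case False
      then have "x - d \<in> dom e'" using x by auto
      then have "\<exists>z\<in>dom e'. x - d < z" using g unfolding good_dom_def by blast
      then obtain z where z: "z \<in> dom e'" "x - d < z" by blast
      then have "0 \<le> z" using g unfolding good_dom_def by auto
      then show ?thesis using z by (intro bexI[of _ "z + d"]) auto
    qed
  qed
  then show ?thesis using Div by simp
qed

lemma inv_kl: "inv a \<Longrightarrow> (\<And>y. inv (f y)) \<Longrightarrow> inv (kl f a)"
  by (cases a) (auto intro: inv_shift)

lemma inv_G: assumes "\<And>\<sigma>. inv (sem p \<sigma>)" shows "inv (G (Fw b p) n \<sigma>)"
proof (induction n arbitrary: \<sigma>)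
  case 0 then show ?case by (simp add: good_dom_def)
next
  case (Suc n) then show ?case by (simp add: G_Fw_Suc inv_kl assms)
qed

lemma inv_gstar: assumes "\<And>n \<sigma>. inv (G f n \<sigma>)" shows "inv (gstar f \<sigma>)"
proof (cases "gstar f \<sigma>")
  case (Conv d e y)
  then show ?thesis using gstar_Conv assms by metis
next
  case (Div U)
  have "dom U = (\<Union>n. dom (traj (G f n \<sigma>)))"
    using traj_gstar[of f \<sigma>] Div by (auto simp: dom_def)
  moreover have "good_dom (\<Union>n. dom (traj (G f n \<sigma>)))"
    by (rule good_dom_Union) (rule inv_good_dom[OF assms])
  ultimately show ?thesis using Div by simp
qed

lemma inv_sem: "inv (sem p \<sigma>)"
proof (induction p arbitrary: \<sigma>)
  case (Assign x s) then show ?case by simp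
next
  case (ODE u s) then show ?case by (auto simp: dur_def dom_def split: if_splits)
next
  case (Seq p q) then show ?case by (simp add: inv_kl)
next
  case (If b p q) then show ?case by simp
next
  case (While b p) then show ?case
    by (simp only: sem_While_gstar) (intro inv_gstar inv_G)
qed

lemma traj_kl_sub: "inv a \<Longrightarrow> traj a t = Some s \<Longrightarrow> traj (kl f a) t = Some s"
  by (cases a) (auto simp: traj_shift cat_def)


lemma no_step_Skip: "\<not> step (Skip, s) c"
  by (auto elim: step.cases)

lemma no_step_Stop: "\<not> step (Stop, s) c"
  by (auto elim: step.cases)

definition rel :: "'v::finite prog \<Rightarrow> real^'v \<Rightarrow> real \<Rightarrow> 'v cmd \<times> (real^'v) \<times> real \<Rightarrow> bool" where
  "rel p \<sigma> t c = (case c of (c0, \<sigma>', t') \<Rightarrow> (case c0 of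
      Skip \<Rightarrow> (\<exists>e. sem p \<sigma> = Conv (t - t') e \<sigma>') \<and> 0 \<le> t' \<and> t' \<le> t
    | Stop \<Rightarrow> traj (sem p \<sigma>) t = Some \<sigma>' \<and> t' = 0
    | Prog p' \<Rightarrow> (\<exists>d e. 0 \<le> d \<and> d \<le> t \<and> t' = t - d \<and> sem p \<sigma> = shift d e (sem p' \<sigma>'))))"

lemma rel_simps:
  "rel p \<sigma> t (Skip, \<sigma>', t') \<longleftrightarrow> (\<exists>e. sem p \<sigma> = Conv (t - t') e \<sigma>') \<and> 0 \<le> t' \<and> t' \<le> t"
  "rel p \<sigma> t (Stop, \<sigma>', t') \<longleftrightarrow> traj (sem p \<sigma>) t = Some \<sigma>' \<and> t' = 0"
  "rel p \<sigma> t (Prog p', \<sigma>', t') \<longleftrightarrow> (\<exists>d e. 0 \<le> d \<and> d \<le> t \<and> t' = t - d \<and> sem p \<sigma> = shift d e (sem p' \<sigma>'))"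
  by (simp_all add: rel_def)

definition relc :: "'v::finite cmd \<times> (real^'v) \<times> real \<Rightarrow> 'v cmd \<times> (real^'v) \<times> real \<Rightarrow> bool" where
  "relc a c = (case a of (Prog p, \<sigma>, t) \<Rightarrow> rel p \<sigma> t c | _ \<Rightarrow> False)"

lemma inv_Conv_nonneg: "sem p \<sigma> = Conv d e y \<Longrightarrow> 0 \<le> d"
  using inv_sem[of p \<sigma>] by simp

lemma step_rel: "step a c \<Longrightarrow> 0 \<le> snd (snd a) \<Longrightarrow> relc a c"
proof (induction rule: step.induct)
  case (assign x s \<sigma> t) then show ?case by (auto simp: relc_def rel_simps eta_def)
next
  case (ode_stop t s \<sigma> u) then show ?case by (auto simp: relc_def rel_simps)
next
  case (ode_skip s \<sigma> t u) then show ?case by (auto simp: relc_def rel_simps dur_def)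
next
  case (if_true b \<sigma> p q t) then show ?case
    by (auto simp: relc_def rel_simps intro!: exI[of _ 0] exI[of _ "traj (sem p \<sigma>)"] simp: shift0)
next
  case (if_false b \<sigma> p q t) then show ?case
    by (auto simp: relc_def rel_simps intro!: exI[of _ 0] exI[of _ "traj (sem q \<sigma>)"] simp: shift0)
next
  case (while_true b \<sigma> p t)
  have "sem (While b p) \<sigma> = sem (Seq p (While b p)) \<sigma>" using while_true sem_While[of b p \<sigma>] by simp
  then show ?case using while_true
    by (auto simp: relc_def rel_simps intro!: exI[of _ 0] exI[of _ "traj (sem (Seq p (While b p)) \<sigma>)"] simp: shift0)
next
  case (while_false b \<sigma> p t) then show ?case
    using sem_While[of b p \<sigma>] by (auto simp: relc_def rel_simps eta_def)
next
  case (seq_stop p \<sigma> t \<sigma>' t' q) then show ?case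
    by (auto simp: relc_def rel_simps intro: traj_kl_sub inv_sem)
next
  case (seq_skip p \<sigma> t \<sigma>' t' q)
  then obtain e where e: "sem p \<sigma> = Conv (t - t') e \<sigma>'" "0 \<le> t'" "t' \<le> t"
    by (auto simp: relc_def rel_simps)
  then show ?case
    by (auto simp: relc_def rel_simps intro!: exI[of _ "t - t'"] exI[of _ e])
next
  case (seq_prog p \<sigma> t p' \<sigma>' t' q)
  then obtain d e where de: "0 \<le> d" "d \<le> t" "t' = t - d" "sem p \<sigma> = shift d e (sem p' \<sigma>')"
    by (auto simp: relc_def rel_simps)
  have "sem (Seq p q) \<sigma> = shift d e (sem (Seq p' q) \<sigma>')"
    using de(4) by (simp add: kl_shift inv_Conv_nonneg)
  then show ?case using de by (auto simp: relc_def rel_simps)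
qed

lemma rel_compose:
  assumes "rel p \<sigma> t (Prog p', \<sigma>b, tb)" "rel p' \<sigma>b tb c"
  shows "rel p \<sigma> t c"
proof -
  obtain d e where de: "0 \<le> d" "d \<le> t" "tb = t - d" "sem p \<sigma> = shift d e (sem p' \<sigma>b)"
    using assms(1) by (auto simp: rel_simps)
  obtain c0 \<sigma>c tc where c: "c = (c0, \<sigma>c, tc)" by (cases c) auto
  show ?thesis
  proof (cases c0)
    case (Prog p'')
    then obtain d' e' where de': "0 \<le> d'" "d' \<le> tb" "tc = tb - d'" "sem p' \<sigma>b = shift d' e' (sem p'' \<sigma>c)"
      using assms(2) c by (auto simp: rel_simps)
    have "sem p \<sigma> = shift (d + d') (cat d e e') (sem p'' \<sigma>c)"
      using de(4) de'(4) de'(1) by (simp add: shift_shift)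
    then show ?thesis using c Prog de de' by (auto simp: rel_simps intro!: exI[of _ "d + d'"])
  next
    case Skip
    then obtain e' where e': "sem p' \<sigma>b = Conv (tb - tc) e' \<sigma>c" "0 \<le> tc" "tc \<le> tb"
      using assms(2) c by (auto simp: rel_simps)
    have "sem p \<sigma> = Conv (t - tc) (cat d e e') \<sigma>c" using de e' by simp
    then show ?thesis using c Skip de e' by (auto simp: rel_simps)
  next
    case Stop
    then have "traj (sem p' \<sigma>b) tb = Some \<sigma>c" "tc = 0" using assms(2) c by (auto simp: rel_simps)
    then show ?thesis using c Stop de by (auto simp: rel_simps traj_shift cat_def)
  qed
qed

lemma run_rel: "step\<^sup>+\<^sup>+ (Prog p, \<sigma>, t) c \<Longrightarrow> 0 \<le> t \<Longrightarrow> rel p \<sigma> t c"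
proof (induction c rule: tranclp_induct)
  case (base y) then show ?case using step_rel[of "(Prog p, \<sigma>, t)" y] by (simp add: relc_def)
next
  case (step y z)
  obtain c0 \<sigma>y ty where y: "y = (c0, \<sigma>y, ty)" by (cases y) auto
  show ?case
  proof (cases c0)
    case (Prog p')
    have r: "rel p \<sigma> t (Prog p', \<sigma>y, ty)" using step y Prog by simp
    then have "0 \<le> ty" by (auto simp: rel_simps)
    then have "rel p' \<sigma>y ty z" using step_rel[of y z] step(2) y Prog by (simp add: relc_def)
    then show ?thesis using rel_compose r by blast
  next
    case Skip then show ?thesis using step(2) y no_step_Skip by metis
  next
    case Stop then show ?thesis using step(2) y no_step_Stop by metis
  qed
qed


definition liftc :: "'v prog \<Rightarrow> 'v cmd \<times> (real^'v) \<times> real \<Rightarrow> 'v cmd \<times> (real^'v) \<times> real" where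
  "liftc q c = (case c of (Prog p', s) \<Rightarrow> (Prog (Seq p' q), s) | (Skip, s) \<Rightarrow> (Prog q, s) | (Stop, s) \<Rightarrow> (Stop, s))"

lemma step_lift: "step (Prog p, s) c \<Longrightarrow> step (Prog (Seq p q), s) (liftc q c)"
proof -
  assume a: "step (Prog p, s) c"
  obtain c0 \<sigma>c tc where c: "c = (c0, \<sigma>c, tc)" by (cases c) auto
  obtain \<sigma> t where s: "s = (\<sigma>, t)" by (cases s) auto
  show ?thesis using a c s by (cases c0) (auto simp: liftc_def intro: step.intros)
qed

lemma run_lift: "step\<^sup>+\<^sup>+ (Prog p, s) c \<Longrightarrow> step\<^sup>+\<^sup>+ (Prog (Seq p q), s) (liftc q c)"
proof (induction c rule: tranclp_induct)
  case (base y) then show ?case using step_lift by (metis tranclp.r_into_trancl)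
next
  case (step y z)
  obtain c0 sy where y: "y = (c0, sy)" by (cases y) auto
  show ?case
  proof (cases c0)
    case (Prog p')
    have "step (Prog (Seq p' q), sy) (liftc q z)" using step_lift step(2) y Prog by metis
    moreover have "liftc q y = (Prog (Seq p' q), sy)" using y Prog by (simp add: liftc_def)
    ultimately show ?thesis using step(3) by (metis tranclp.trancl_into_trancl)
  next
    case Skip then show ?thesis using step(2) y no_step_Skip by (metis prod.collapse)
  next
    case Stop then show ?thesis using step(2) y no_step_Stop by (metis prod.collapse)
  qed
qed

lemma run_lift_Skip: "step\<^sup>+\<^sup>+ (Prog p, \<sigma>, t) (Skip, \<sigma>', t') \<Longrightarrow> step\<^sup>+\<^sup>+ (Prog (Seq p q), \<sigma>, t) (Prog q, \<sigma>', t')"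
  using run_lift[of p "(\<sigma>, t)" "(Skip, \<sigma>', t')" q] by (simp add: liftc_def)

lemma run_lift_Stop: "step\<^sup>+\<^sup>+ (Prog p, \<sigma>, t) (Stop, \<sigma>', t') \<Longrightarrow> step\<^sup>+\<^sup>+ (Prog (Seq p q), \<sigma>, t) (Stop, \<sigma>', t')"
  using run_lift[of p "(\<sigma>, t)" "(Stop, \<sigma>', t')" q] by (simp add: liftc_def)

definition CSkip :: "'v::finite prog \<Rightarrow> (real^'v \<Rightarrow> (real^'v, real^'v) H) \<Rightarrow> bool" where
  "CSkip p g \<longleftrightarrow> (\<forall>\<sigma> t d e \<sigma>'. g \<sigma> = Conv d e \<sigma>' \<longrightarrow> d \<le> t \<longrightarrow> 0 \<le> t \<longrightarrow>
       step\<^sup>+\<^sup>+ (Prog p, \<sigma>, t) (Skip, \<sigma>', t - d))"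

definition CStop :: "'v::finite prog \<Rightarrow> (real^'v \<Rightarrow> (real^'v, real^'v) H) \<Rightarrow> bool" where
  "CStop p g \<longleftrightarrow> (\<forall>\<sigma> t \<sigma>'. traj (g \<sigma>) t = Some \<sigma>' \<longrightarrow> 0 \<le> t \<longrightarrow>
       step\<^sup>+\<^sup>+ (Prog p, \<sigma>, t) (Stop, \<sigma>', 0))"

lemma complete_kl:
  assumes P1: "CSkip p (sem p)" and P2: "CStop p (sem p)"
    and Q1: "CSkip q g" and Q2: "CStop q g" and ginv: "\<And>\<sigma>. inv (g \<sigma>)"
  shows "CSkip (Seq p q) (\<lambda>\<sigma>. kl g (sem p \<sigma>))" "CStop (Seq p q) (\<lambda>\<sigma>. kl g (sem p \<sigma>))"
proof -
  show "CSkip (Seq p q) (\<lambda>\<sigma>. kl g (sem p \<sigma>))"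
    unfolding CSkip_def
  proof (intro allI impI)
    fix \<sigma> t d e \<sigma>'
    assume a: "kl g (sem p \<sigma>) = Conv d e \<sigma>'" "d \<le> t" "0 \<le> t"
    obtain d1 e1 \<sigma>1 where s1: "sem p \<sigma> = Conv d1 e1 \<sigma>1"
      using a(1) by (cases "sem p \<sigma>") auto
    obtain d2 e2 where s2: "g \<sigma>1 = Conv d2 e2 \<sigma>'" "d = d1 + d2"
      using a(1) s1 by (cases "g \<sigma>1") auto
    have "0 \<le> d2" using ginv[of \<sigma>1] s2 by simp
    then have "d1 \<le> t" using a s2 by simp
    then have r1: "step\<^sup>+\<^sup>+ (Prog p, \<sigma>, t) (Skip, \<sigma>1, t - d1)" using P1 s1 a(3) unfolding CSkip_def by blast
    have r2: "step\<^sup>+\<^sup>+ (Prog q, \<sigma>1, t - d1) (Skip, \<sigma>', t - d1 - d2)"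
      using Q1 s2 a \<open>d1 \<le> t\<close> unfolding CSkip_def by simp
    show "step\<^sup>+\<^sup>+ (Prog (Seq p q), \<sigma>, t) (Skip, \<sigma>', t - d)"
      using tranclp_trans[OF run_lift_Skip[OF r1] r2] s2 by (simp add: algebra_simps)
  qed
  show "CStop (Seq p q) (\<lambda>\<sigma>. kl g (sem p \<sigma>))"
    unfolding CStop_def
  proof (intro allI impI)
    fix \<sigma> t \<sigma>'
    assume a: "traj (kl g (sem p \<sigma>)) t = Some \<sigma>'" "0 \<le> t"
    show "step\<^sup>+\<^sup>+ (Prog (Seq p q), \<sigma>, t) (Stop, \<sigma>', 0)"
    proof (cases "sem p \<sigma>")
      case (Div e1)
      then have "traj (sem p \<sigma>) t = Some \<sigma>'" using a by simp
      then show ?thesis using P2 a(2) run_lift_Stop unfolding CStop_def by blast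
    next
      case (Conv d1 e1 \<sigma>1)
      show ?thesis
      proof (cases "t < d1")
        case True
        then have "traj (sem p \<sigma>) t = Some \<sigma>'" using a Conv by (simp add: traj_shift cat_def)
        then show ?thesis using P2 a(2) run_lift_Stop unfolding CStop_def by blast
      next
        case False
        then have r1: "step\<^sup>+\<^sup>+ (Prog p, \<sigma>, t) (Skip, \<sigma>1, t - d1)" using P1 Conv a(2) unfolding CSkip_def by simp
        have "traj (g \<sigma>1) (t - d1) = Some \<sigma>'" using a Conv False by (simp add: traj_shift cat_def)
        then have r2: "step\<^sup>+\<^sup>+ (Prog q, \<sigma>1, t - d1) (Stop, \<sigma>', 0)"
          using Q2 False unfolding CStop_def by simp
        show ?thesis using tranclp_trans[OF run_lift_Skip[OF r1] r2] .
      qed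
    qed
  qed
qed

lemma complete: "CSkip p (sem p) \<and> CStop p (sem p)"
proof (induction p)
  case (Assign x s)
  show ?case by (auto simp: CSkip_def CStop_def eta_def intro: step.intros)
next
  case (ODE u s)
  show ?case by (auto simp: CSkip_def CStop_def intro: step.intros split: if_splits)
next
  case (Seq p q)
  then show ?case using complete_kl[of p q "sem q"] inv_sem by (simp add: inv_sem)
next
  case (If b p q)
  then show ?case
    by (auto simp: CSkip_def CStop_def intro: tranclp_into_tranclp2 step.intros)
next
  case (While b p)
  let ?W = "While b p"
  have G: "CSkip ?W (G (Fw b p) n) \<and> CStop ?W (G (Fw b p) n)" for n
  proof (induction n)
    case 0 then show ?case by (simp add: CSkip_def CStop_def)
  next
    case (Suc n)
    have k: "CSkip (Seq p ?W) (\<lambda>\<sigma>. kl (G (Fw b p) n) (sem p \<sigma>))"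
         "CStop (Seq p ?W) (\<lambda>\<sigma>. kl (G (Fw b p) n) (sem p \<sigma>))"
      using complete_kl[of p ?W "G (Fw b p) n"] While Suc inv_G inv_sem by blast+
    show ?case
      unfolding CSkip_def CStop_def G_Fw_Suc
    proof (intro conjI allI impI)
      fix \<sigma> t d e \<sigma>'
      assume a: "(if bval b \<sigma> then kl (G (Fw b p) n) (sem p \<sigma>) else eta \<sigma>) = Conv d e \<sigma>'" "d \<le> t" "0 \<le> t"
      show "step\<^sup>+\<^sup>+ (Prog ?W, \<sigma>, t) (Skip, \<sigma>', t - d)"
      proof (cases "bval b \<sigma>")
        case True
        then have "step\<^sup>+\<^sup>+ (Prog (Seq p ?W), \<sigma>, t) (Skip, \<sigma>', t - d)" using k(1) a unfolding CSkip_def by simp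
        then show ?thesis using True by (blast intro: tranclp_into_tranclp2 step.intros)
      next
        case False
        then show ?thesis using a by (auto simp: eta_def intro: step.intros)
      qed
    next
      fix \<sigma> t \<sigma>'
      assume a: "traj (if bval b \<sigma> then kl (G (Fw b p) n) (sem p \<sigma>) else eta \<sigma>) t = Some \<sigma>'" "0 \<le> t"
      show "step\<^sup>+\<^sup>+ (Prog ?W, \<sigma>, t) (Stop, \<sigma>', 0)"
      proof (cases "bval b \<sigma>")
        case True
        then have "step\<^sup>+\<^sup>+ (Prog (Seq p ?W), \<sigma>, t) (Stop, \<sigma>', 0)" using k(2) a unfolding CStop_def by simp
        then show ?thesis using True by (blast intro: tranclp_into_tranclp2 step.intros)
      next
        case False
        then show ?thesis using a by (simp add: eta_def)
      qed
    qed
  qed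
  show ?case
    unfolding CSkip_def CStop_def sem_While_gstar
  proof (intro conjI allI impI)
    fix \<sigma> t d e \<sigma>'
    assume a: "gstar (Fw b p) \<sigma> = Conv d e \<sigma>'" "d \<le> t" "0 \<le> t"
    then obtain n where "G (Fw b p) n \<sigma> = Conv d e \<sigma>'" using gstar_Conv by metis
    then show "step\<^sup>+\<^sup>+ (Prog ?W, \<sigma>, t) (Skip, \<sigma>', t - d)" using G[of n] a unfolding CSkip_def by blast
  next
    fix \<sigma> t \<sigma>'
    assume a: "traj (gstar (Fw b p) \<sigma>) t = Some \<sigma>'" "0 \<le> t"
    then obtain n where "traj (G (Fw b p) n \<sigma>) t = Some \<sigma>'" using traj_gstar by metis
    then show "step\<^sup>+\<^sup>+ (Prog ?W, \<sigma>, t) (Stop, \<sigma>', 0)" using G[of n] a unfolding CStop_def by blast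
  qed
qed


lemma good_dom_ereal:
  assumes g: "good_dom A"
  shows "\<exists>D::ereal. A = {x. 0 \<le> x \<and> ereal x < D}"
proof (cases "A = {}")
  case True then show ?thesis by (intro exI[of _ 0]) auto
next
  case False
  define D where "D = Sup (ereal ` A)"
  have "A = {x. 0 \<le> x \<and> ereal x < D}"
  proof (intro set_eqI iffI)
    fix x assume x: "x \<in> A"
    then obtain y where y: "y \<in> A" "x < y" using g unfolding good_dom_def by blast
    have "ereal x < ereal y" using y by simp
    also have "ereal y \<le> D" unfolding D_def using y by (intro Sup_upper) auto
    finally show "x \<in> {x. 0 \<le> x \<and> ereal x < D}" using x g unfolding good_dom_def by auto
  next
    fix x assume x: "x \<in> {x. 0 \<le> x \<and> ereal x < D}"
    then have "ereal x < Sup (ereal ` A)" by (simp add: D_def)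
    then obtain y where y: "y \<in> A" "ereal x < ereal y" by (auto simp: less_Sup_iff)
    then show "x \<in> A" using x g unfolding good_dom_def by auto
  qed
  then show ?thesis by blast
qed

theorem theorem5:
  fixes p :: "'v::finite prog" and \<sigma> \<sigma>' :: "real^'v" and t :: real
  assumes "t \<ge> 0"
  shows "(step\<^sup>+\<^sup>+ (Prog p, \<sigma>, t) (Skip, \<sigma>', 0) \<longleftrightarrow>
            (\<exists>h. dom h = {0..<t} \<and> sem p \<sigma> = Conv t h \<sigma>'))
       \<and> (step\<^sup>+\<^sup>+ (Prog p, \<sigma>, t) (Stop, \<sigma>', 0) \<longleftrightarrow>
            (\<exists>t'::ereal. \<exists>h. t' > ereal t \<and> dom h = {x. 0 \<le> x \<and> ereal x < t'} \<and> h t = Some \<sigma>'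
               \<and> ((\<exists>\<sigma>''. t' \<noteq> \<infinity> \<and> sem p \<sigma> = Conv (real_of_ereal t') h \<sigma>'') \<or> sem p \<sigma> = Div h)))"
proof (intro conjI iffI)
  assume "step\<^sup>+\<^sup>+ (Prog p, \<sigma>, t) (Skip, \<sigma>', 0)"
  then have "rel p \<sigma> t (Skip, \<sigma>', 0)" using run_rel assms by blast
  then obtain e where e: "sem p \<sigma> = Conv t e \<sigma>'" by (auto simp: rel_simps)
  then have "dom e = {0..<t}" using inv_sem[of p \<sigma>] by simp
  then show "\<exists>h. dom h = {0..<t} \<and> sem p \<sigma> = Conv t h \<sigma>'" using e by blast
next
  assume "\<exists>h. dom h = {0..<t} \<and> sem p \<sigma> = Conv t h \<sigma>'"
  then obtain h where "sem p \<sigma> = Conv t h \<sigma>'" by blast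
  then show "step\<^sup>+\<^sup>+ (Prog p, \<sigma>, t) (Skip, \<sigma>', 0)"
    using complete[of p] assms unfolding CSkip_def by fastforce
next
  assume "step\<^sup>+\<^sup>+ (Prog p, \<sigma>, t) (Stop, \<sigma>', 0)"
  then have "rel p \<sigma> t (Stop, \<sigma>', 0)" using run_rel assms by blast
  then have tr: "traj (sem p \<sigma>) t = Some \<sigma>'" by (auto simp: rel_simps)
  show "\<exists>t'::ereal. \<exists>h. t' > ereal t \<and> dom h = {x. 0 \<le> x \<and> ereal x < t'} \<and> h t = Some \<sigma>'
               \<and> ((\<exists>\<sigma>''. t' \<noteq> \<infinity> \<and> sem p \<sigma> = Conv (real_of_ereal t') h \<sigma>'') \<or> sem p \<sigma> = Div h)"
  proof (cases "sem p \<sigma>")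
    case (Conv d e y)
    then have de: "dom e = {0..<d}" using inv_sem[of p \<sigma>] by simp
    have "t \<in> dom e" using tr Conv by auto
    then have "t < d" using de by auto
    moreover have "dom e = {x. 0 \<le> x \<and> ereal x < ereal d}" using de by auto
    ultimately show ?thesis using Conv tr by (intro exI[of _ "ereal d"] exI[of _ e]) auto
  next
    case (Div e)
    then have "good_dom (dom e)" using inv_sem[of p \<sigma>] by simp
    then obtain D where D: "dom e = {x. 0 \<le> x \<and> ereal x < D}" using good_dom_ereal by blast
    have "t \<in> dom e" using tr Div by auto
    then have "ereal t < D" using D by auto
    then show ?thesis using Div tr D by (intro exI[of _ D] exI[of _ e]) auto
  qed
next
  assume "\<exists>t'::ereal. \<exists>h. t' > ereal t \<and> dom h = {x. 0 \<le> x \<and> ereal x < t'} \<and> h t = Some \<sigma>'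
               \<and> ((\<exists>\<sigma>''. t' \<noteq> \<infinity> \<and> sem p \<sigma> = Conv (real_of_ereal t') h \<sigma>'') \<or> sem p \<sigma> = Div h)"
  then have "traj (sem p \<sigma>) t = Some \<sigma>'" by auto
  then show "step\<^sup>+\<^sup>+ (Prog p, \<sigma>, t) (Stop, \<sigma>', 0)"
    using complete[of p] assms unfolding CStop_def by blast
qed

end
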